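(* Let $(X,\theta)$ be a one-sided subshift of finite type over a finite alphabet. Let $\varphi,\psi\in\mathcal{C}(X)$ with $\mathcal{L}_\psi\mathbbm{1}=\mathbbm{1}$, let $\mu$ be a $g$-measure for the potential $\psi$, and suppose that $t\mapsto P(t\varphi+\psi)$ is differentiable at $0$. Then for every $\varepsilon>0$ there is $\delta(\varepsilon)>0$ such that for all sufficiently large $n$ \[\mu\Big(\Big\{x\in X:\Big|\frac{S_n\varphi(x)}{n}-\mu(\varphi)\Big|\ge\varepsilon\Big\}\Big)\le\exp(-n\delta(\varepsilon)).\]
   Context: $\mathcal{C}(X)$: real continuous functions on $X$; $S_nf=\sum_{k=0}^{n-1}f\circ\theta^k$; $\mu(\varphi)=\int\varphi\,d\mu$. $C_n$ is the set of $n$-cylinders, and the pressure is $P(f)=\lim_{n\to\infty}\frac1n\log\sum_{C\in C_n}\exp(\sup_{x\in C}S_nf(x))$. The Perron–Frobenius operator is $\mathcal{L}_\psi g(x)=\sum_{y\in\theta^{-1}\{x\}}e^{\psi(y)}g(y)$ on $\mathcal{C}(X)$. If $\mathcal{L}_\psi\mathbbm{1}=\mathbbm{1}$, a $g$-measure for $\psi$ is a Borel probability measure $\mu$ on $X$ with $\mathcal{L}_\psi^*\mu=\mu$, i.e. $\int\mathcal{L}_\psi g\,d\mu=\int g\,d\mu$ for all $g\in\mathcal{C}(X)$. *)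

theory Defs
  imports "HOL-Analysis.Analysis" "HOL-Probability.Probability"
begin

text \<open>One-sided sequences over the alphabet {0..<k} (a finite subset of the discrete space nat),
  carrying the product topology.\<close>

definition sft :: "nat \<Rightarrow> nat list set \<Rightarrow> (nat \<Rightarrow> nat) set" where
  "sft k F = {x. (\<forall>i. x i < k) \<and>
      (\<forall>i. \<forall>w\<in>F. map (\<lambda>j. x (i + j)) [0..<length w] \<noteq> w)}"

definition shift :: "(nat \<Rightarrow> nat) \<Rightarrow> (nat \<Rightarrow> nat)" where
  "shift x = (\<lambda>n. x (Suc n))"

definition birkhoff_sum :: "nat \<Rightarrow> ((nat \<Rightarrow> nat) \<Rightarrow> real) \<Rightarrow> (nat \<Rightarrow> nat) \<Rightarrow> real" where
  "birkhoff_sum n f x = (\<Sum>i<n. f ((shift ^^ i) x))"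

definition cylinders :: "(nat \<Rightarrow> nat) set \<Rightarrow> nat \<Rightarrow> (nat \<Rightarrow> nat) set set" where
  "cylinders X n = {C. \<exists>x\<in>X. C = {y\<in>X. \<forall>i<n. y i = x i}}"

definition pressure :: "(nat \<Rightarrow> nat) set \<Rightarrow> ((nat \<Rightarrow> nat) \<Rightarrow> real) \<Rightarrow> real" where
  "pressure X f = lim (\<lambda>n. (1 / real n) *
      ln (\<Sum>C\<in>cylinders X n. exp (SUP x\<in>C. birkhoff_sum n f x)))"

definition transfer_op :: "(nat \<Rightarrow> nat) set \<Rightarrow> ((nat \<Rightarrow> nat) \<Rightarrow> real) \<Rightarrow>
    ((nat \<Rightarrow> nat) \<Rightarrow> real) \<Rightarrow> (nat \<Rightarrow> nat) \<Rightarrow> real" where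
  "transfer_op X \<psi> g x = (\<Sum>y\<in>{y\<in>X. shift y = x}. exp (\<psi> y) * g y)"

definition g_measure :: "(nat \<Rightarrow> nat) set \<Rightarrow> ((nat \<Rightarrow> nat) \<Rightarrow> real) \<Rightarrow> (nat \<Rightarrow> nat) measure \<Rightarrow> bool" where
  "g_measure X \<psi> \<mu> \<longleftrightarrow> prob_space \<mu> \<and> sets \<mu> = sets (restrict_space borel X) \<and>
     (\<forall>g. continuous_on X g \<longrightarrow>
        (\<integral>x. transfer_op X \<psi> g x \<partial>\<mu>) = (\<integral>x. g x \<partial>\<mu>))"

end

theory Submission
  imports Defs
begin



lemma open_cyl: "open {y::nat\<Rightarrow>nat. \<forall>i<r. y i = x i}"
proof -
  have "open {f::nat\<Rightarrow>nat. \<forall>i\<in>{..<r}. f (id i) \<in> {x i}}"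
    by (rule product_topology_basis') (auto intro: discrete_topology_class.open_discrete)
  moreover have "{f::nat\<Rightarrow>nat. \<forall>i\<in>{..<r}. f (id i) \<in> {x i}} = {y. \<forall>i<r. y i = x i}" by auto
  ultimately show ?thesis by simp
qed

lemma cont_imp_cyl:
  fixes g :: "(nat\<Rightarrow>nat) \<Rightarrow> real"
  assumes "continuous_on X g" "x \<in> X" "e > 0"
  shows "\<exists>r. \<forall>y\<in>X. (\<forall>i<r. y i = x i) \<longrightarrow> \<bar>g y - g x\<bar> < e"
proof -
  obtain A where A: "open A" "x \<in> A" "\<forall>y\<in>X. y \<in> A \<longrightarrow> g y \<in> ball (g x) e"
    using assms unfolding continuous_on_topological by (meson centre_in_ball open_ball)
  have "openin (product_topology (\<lambda>i. euclidean) UNIV) A" using A(1) by (simp add: open_fun_def)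
  from product_topology_open_contains_basis[OF this A(2)]
  obtain Xs where Xs: "x \<in> (\<Pi>\<^sub>E i\<in>UNIV. Xs i)" "finite {i. Xs i \<noteq> topspace euclidean}"
      "(\<Pi>\<^sub>E i\<in>UNIV. Xs i) \<subseteq> A" by blast
  define r where "r = Suc (Max (insert 0 {i. Xs i \<noteq> UNIV}))"
  have "\<forall>y\<in>X. (\<forall>i<r. y i = x i) \<longrightarrow> \<bar>g y - g x\<bar> < e"
  proof (intro ballI impI)
    fix y assume y: "y \<in> X" "\<forall>i<r. y i = x i"
    have "y \<in> (\<Pi>\<^sub>E i\<in>UNIV. Xs i)"
    proof (clarsimp simp: PiE_iff)
      fix i
      show "y i \<in> Xs i"
      proof (cases "Xs i = UNIV")
        case False
        then have "i \<le> Max (insert 0 {i. Xs i \<noteq> UNIV})" using Xs(2) by (intro Max_ge) auto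
        then have "y i = x i" using y(2) r_def by auto
        then show ?thesis using Xs(1) by (auto simp: PiE_iff)
      qed auto
    qed
    then have "dist (g x) (g y) < e" using A(3) Xs(3) y(1) by auto
    then show "\<bar>g y - g x\<bar> < e" by (metis dist_real_def abs_minus_commute)
  qed
  then show ?thesis by blast
qed

lemma cyl_imp_cont:
  fixes g :: "(nat\<Rightarrow>nat) \<Rightarrow> real"
  assumes "\<And>x e. x \<in> X \<Longrightarrow> e > 0 \<Longrightarrow> \<exists>r. \<forall>y\<in>X. (\<forall>i<r. y i = x i) \<longrightarrow> \<bar>g y - g x\<bar> < e"
  shows "continuous_on X g"
  unfolding continuous_on_topological
proof (intro ballI allI impI)
  fix x B assume x: "x \<in> X" and B: "open B" "g x \<in> B"
  obtain e where e: "e > 0" "ball (g x) e \<subseteq> B" using B open_contains_ball by blast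
  obtain r where r: "\<forall>y\<in>X. (\<forall>i<r. y i = x i) \<longrightarrow> \<bar>g y - g x\<bar> < e" using assms[OF x e(1)] by blast
  show "\<exists>A. open A \<and> x \<in> A \<and> (\<forall>y\<in>X. y \<in> A \<longrightarrow> g y \<in> B)"
    by (rule exI[of _ "{y. \<forall>i<r. y i = x i}"]) (use open_cyl r e in \<open>auto simp: dist_real_def abs_minus_commute\<close>)
qed




lemma funpow_shift: "(shift ^^ n) x = (\<lambda>i. x (i + n))"
  by (induction n arbitrary: x) (auto simp: shift_def)

lemma sft_shift: "x \<in> sft k F \<Longrightarrow> shift x \<in> sft k F"
proof -
  assume x: "x \<in> sft k F"
  have "map (\<lambda>j. x (Suc i + j)) [0..<length w] \<noteq> w" if "w \<in> F" for i w
    using x that unfolding sft_def by blast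
  then show ?thesis using x unfolding sft_def shift_def by auto
qed

lemma sft_funpow: "x \<in> sft k F \<Longrightarrow> (shift ^^ n) x \<in> sft k F"
  by (induction n) (auto simp: sft_shift)

lemma birkhoff_add:
  "birkhoff_sum (n + m) f x = birkhoff_sum n f x + birkhoff_sum m f ((shift ^^ n) x)"
proof (induction m)
  case 0 then show ?case by (simp add: birkhoff_sum_def)
next
  case (Suc m)
  have "(shift ^^ m) ((shift ^^ n) x) = (shift ^^ (n + m)) x"
    by (simp add: funpow_add add.commute)
  then show ?case using Suc by (simp add: birkhoff_sum_def)
qed

lemma birkhoff_Suc: "birkhoff_sum (Suc n) f x = f x + birkhoff_sum n f (shift x)"
  using birkhoff_add[of 1 n f x] by (simp add: birkhoff_sum_def)

lemma birkhoff_0[simp]: "birkhoff_sum 0 f x = 0"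
  by (simp add: birkhoff_sum_def)

lemma birkhoff_lin: "birkhoff_sum n (\<lambda>x. t * f x + g x) x = t * birkhoff_sum n f x + birkhoff_sum n g x"
  by (simp add: birkhoff_sum_def sum.distrib sum_distrib_left)

lemma cont_shift:
  fixes g :: "(nat\<Rightarrow>nat) \<Rightarrow> real"
  assumes "continuous_on (sft k F) g"
  shows "continuous_on (sft k F) (\<lambda>x. g (shift x))"
proof (rule cyl_imp_cont)
  fix x and e :: real assume x: "x \<in> sft k F" and e: "e > 0"
  obtain r where r: "\<forall>y\<in>sft k F. (\<forall>i<r. y i = shift x i) \<longrightarrow> \<bar>g y - g (shift x)\<bar> < e"
    using cont_imp_cyl[OF assms sft_shift[OF x] e] by blast
  show "\<exists>r. \<forall>y\<in>sft k F. (\<forall>i<r. y i = x i) \<longrightarrow> \<bar>g (shift y) - g (shift x)\<bar> < e"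
    by (rule exI[of _ "Suc r"]) (use r sft_shift in \<open>auto simp: shift_def\<close>)
qed

lemma cont_birkhoff:
  fixes f :: "(nat\<Rightarrow>nat) \<Rightarrow> real"
  assumes "continuous_on (sft k F) f"
  shows "continuous_on (sft k F) (birkhoff_sum n f)"
proof (induction n)
  case 0 then show ?case by (simp add: birkhoff_sum_def)
next
  case (Suc n)
  show ?case
  proof -
    have "continuous_on (sft k F) (\<lambda>x. f x + birkhoff_sum n f (shift x))"
      by (intro continuous_on_add assms cont_shift Suc)
    then show ?thesis by (simp add: birkhoff_Suc[abs_def])
  qed
qed

lemma closed_sft: "closed (sft k F)"
  unfolding closed_def
proof (subst open_subopen, intro ballI)
  fix x assume "x \<in> - sft k F"
  then have "(\<exists>i. x i \<ge> k) \<or> (\<exists>i. \<exists>w\<in>F. map (\<lambda>j. x (i + j)) [0..<length w] = w)"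
    by (auto simp: sft_def not_less)
  then show "\<exists>T. open T \<and> x \<in> T \<and> T \<subseteq> - sft k F"
  proof
    assume "\<exists>i. x i \<ge> k"
    then obtain i where i: "x i \<ge> k" by blast
    show ?thesis
      by (rule exI[of _ "{y. \<forall>j<Suc i. y j = x j}"]) (use i in \<open>auto simp: open_cyl sft_def not_less; metis lessI leD\<close>)
  next
    assume "\<exists>i. \<exists>w\<in>F. map (\<lambda>j. x (i + j)) [0..<length w] = w"
    then obtain i w where iw: "w \<in> F" "map (\<lambda>j. x (i + j)) [0..<length w] = w" by blast
    have "y \<notin> sft k F" if "\<forall>j<i + length w. y j = x j" for y
    proof -
      have "map (\<lambda>j. y (i + j)) [0..<length w] = map (\<lambda>j. x (i + j)) [0..<length w]"
        using that by (intro map_cong) auto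
      then show ?thesis using iw by (auto simp: sft_def)
    qed
    then show ?thesis
      by (intro exI[of _ "{y. \<forall>j<i + length w. y j = x j}"]) (auto simp: open_cyl)
  qed
qed

lemma compact_sft: "compact (sft k F)"
proof -
  have "compactin (product_topology (\<lambda>i. euclidean) UNIV) (PiE UNIV (\<lambda>_::nat. {..<k}))"
    by (subst compactin_PiE) (auto intro: finite_imp_compact)
  then have c: "compact (PiE UNIV (\<lambda>_::nat. {..<k}))"
    by (simp add: euclidean_product_topology)
  have "sft k F = PiE UNIV (\<lambda>_::nat. {..<k}) \<inter> sft k F"
    by (auto simp: sft_def PiE_iff)
  then show ?thesis using compact_Int_closed[OF c closed_sft[of k F]] by simp
qed

lemma cont_bounded:
  fixes g :: "(nat\<Rightarrow>nat) \<Rightarrow> real"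
  assumes "continuous_on (sft k F) g"
  shows "\<exists>B. \<forall>x\<in>sft k F. \<bar>g x\<bar> \<le> B"
proof -
  have "compact (g ` sft k F)" by (rule compact_continuous_image[OF assms compact_sft])
  then have "bounded (g ` sft k F)" by (rule compact_imp_bounded)
  then show ?thesis by (auto simp: bounded_iff)
qed

lemma unif_cont:
  fixes g :: "(nat\<Rightarrow>nat) \<Rightarrow> real"
  assumes "continuous_on (sft k F) g" "e > 0"
  shows "\<exists>R. \<forall>y\<in>sft k F. \<forall>y'\<in>sft k F. (\<forall>i<R. y i = y' i) \<longrightarrow> \<bar>g y - g y'\<bar> < e"
proof -
  have "\<forall>x\<in>sft k F. \<exists>r. \<forall>y\<in>sft k F. (\<forall>i<r. y i = x i) \<longrightarrow> \<bar>g y - g x\<bar> < e/2"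
    using cont_imp_cyl[OF assms(1)] assms(2) half_gt_zero by blast
  then obtain r where r: "\<And>x y. x \<in> sft k F \<Longrightarrow> y\<in>sft k F \<Longrightarrow> (\<forall>i<r x. y i = x i) \<Longrightarrow> \<bar>g y - g x\<bar> < e/2"
    by metis
  have cov: "sft k F \<subseteq> \<Union>((\<lambda>x. {y. \<forall>i<r x. y i = x i}) ` sft k F)" by auto
  have "\<exists>T. T \<subseteq> sft k F \<and> finite T \<and> sft k F \<subseteq> \<Union>((\<lambda>x. {y. \<forall>i<r x. y i = x i}) ` T)"
    apply (rule compactE_image[OF compact_sft[of k F], where f="\<lambda>x. {y. \<forall>i<r x. y i = x i}" and C="sft k F"])
      apply (rule open_cyl)
     apply (rule cov)
    apply blast
    done
  then obtain T where T: "T \<subseteq> sft k F" "finite T" "sft k F \<subseteq> \<Union>((\<lambda>x. {y. \<forall>i<r x. y i = x i}) ` T)"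
    by blast
  define R where "R = Max (insert 0 (r ` T))"
  have "\<forall>y\<in>sft k F. \<forall>y'\<in>sft k F. (\<forall>i<R. y i = y' i) \<longrightarrow> \<bar>g y - g y'\<bar> < e"
  proof (intro ballI impI)
    fix y y' assume y: "y \<in> sft k F" "y' \<in> sft k F" "\<forall>i<R. y i = y' i"
    obtain x where x: "x \<in> T" "\<forall>i<r x. y i = x i" using T(3) y(1) by blast
    have "r x \<le> R" unfolding R_def using T(2) x(1) by (intro Max_ge) auto
    then have "\<forall>i<r x. y' i = x i" using x(2) y(3) by auto
    then have "\<bar>g y' - g x\<bar> < e/2" "\<bar>g y - g x\<bar> < e/2" using r x T(1) y by auto
    then show "\<bar>g y - g y'\<bar> < e" by linarith
  qed
  then show ?thesis by blast
qed




definition consf :: "nat \<Rightarrow> (nat \<Rightarrow> nat) \<Rightarrow> (nat \<Rightarrow> nat)" where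
  "consf a x = (\<lambda>i. if i = 0 then a else x (i - 1))"

lemma shift_consf[simp]: "shift (consf a x) = x"
  by (simp add: shift_def consf_def)

lemma consf_shift: "consf (y 0) (shift y) = y"
  by (auto simp: shift_def consf_def fun_eq_iff)

locale sfts =
  fixes k :: nat and F :: "nat list set" and \<psi> :: "(nat \<Rightarrow> nat) \<Rightarrow> real"
  assumes finF: "finite F" and cont\<psi>: "continuous_on (sft k F) \<psi>"
begin

abbreviation "X \<equiv> sft k F"

definition M :: nat where "M = Max (insert 0 (length ` F))"

lemma len_le_M: "w \<in> F \<Longrightarrow> length w \<le> M"
  unfolding M_def using finF by (intro Max_ge) auto

definition pre :: "nat \<Rightarrow> (nat \<Rightarrow> nat) \<Rightarrow> (nat \<Rightarrow> nat) set" where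
  "pre n x = {y \<in> X. (shift ^^ n) y = x}"

definition T :: "nat \<Rightarrow> ((nat \<Rightarrow> nat) \<Rightarrow> real) \<Rightarrow> (nat \<Rightarrow> nat) \<Rightarrow> real" where
  "T n g x = (\<Sum>y\<in>pre n x. exp (birkhoff_sum n \<psi> y) * g y)"

definition word :: "nat \<Rightarrow> (nat \<Rightarrow> nat) \<Rightarrow> nat list" where
  "word n y = map y [0..<n]"

lemma word_eq_iff: "word n y = word n y' \<longleftrightarrow> (\<forall>i<n. y i = y' i)"
  by (auto simp: word_def map_eq_conv)

lemma words_finite: "finite {w. set w \<subseteq> {..<k} \<and> length w = n}"
  by (rule finite_lists_length_eq) simp

lemma word_in: "y \<in> X \<Longrightarrow> word n y \<in> {w. set w \<subseteq> {..<k} \<and> length w = n}"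
  by (auto simp: word_def sft_def)

lemma inj_word_pre: "inj_on (word n) (pre n x)"
proof (rule inj_onI)
  fix y y' assume y: "y \<in> pre n x" "y' \<in> pre n x" "word n y = word n y'"
  show "y = y'"
  proof
    fix i show "y i = y' i"
    proof (cases "i < n")
      case True then show ?thesis using y(3) word_eq_iff by blast
    next
      case False
      have "(shift ^^ n) y (i - n) = (shift ^^ n) y' (i - n)" using y(1,2) by (simp add: pre_def)
      then show ?thesis using False by (simp add: funpow_shift)
    qed
  qed
qed

lemma finite_pre: "finite (pre n x)"
proof (rule finite_imageD[OF _ inj_word_pre])
  show "finite (word n ` pre n x)"
    by (rule finite_subset[OF _ words_finite[of n]]) (auto simp: pre_def dest: word_in)
qed

lemma pre_X: "y \<in> pre n x \<Longrightarrow> y \<in> X"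
  by (simp add: pre_def)

lemma pre_1: "pre 1 x = {y \<in> X. shift y = x}"
  by (simp add: pre_def)

lemma transfer_T1: "transfer_op X \<psi> g x = T 1 g x"
  by (simp add: transfer_op_def T_def pre_def birkhoff_sum_def)

lemma T_Suc: "T (Suc n) g x = T n (transfer_op X \<psi> g) x"
proof -
  have fin: "finite (pre (Suc n) x)" "finite (pre n x)" by (rule finite_pre)+
  have sub: "shift ` pre (Suc n) x \<subseteq> pre n x"
    by (auto simp: pre_def sft_shift funpow_swap1)
  have "T (Suc n) g x = (\<Sum>z\<in>pre n x. \<Sum>y\<in>{y \<in> pre (Suc n) x. shift y = z}. exp (birkhoff_sum (Suc n) \<psi> y) * g y)"
    unfolding T_def by (rule sum.group[OF fin sub, symmetric])
  also have "\<dots> = (\<Sum>z\<in>pre n x. exp (birkhoff_sum n \<psi> z) * transfer_op X \<psi> g z)"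
  proof (rule sum.cong[OF refl])
    fix z assume z: "z \<in> pre n x"
    have e: "{y \<in> pre (Suc n) x. shift y = z} = {y \<in> X. shift y = z}"
      using z by (auto simp: pre_def funpow_swap1)
    show "(\<Sum>y\<in>{y \<in> pre (Suc n) x. shift y = z}. exp (birkhoff_sum (Suc n) \<psi> y) * g y) =
          exp (birkhoff_sum n \<psi> z) * transfer_op X \<psi> g z"
      unfolding e transfer_op_def sum_distrib_left
      by (rule sum.cong) (auto simp: birkhoff_Suc exp_add)
  qed
  finally show ?thesis by (simp add: T_def)
qed

lemma pre_0: "pre 0 x = (if x \<in> X then {x} else {})"
  by (auto simp: pre_def)

lemma T_0: "x \<in> X \<Longrightarrow> T 0 g x = g x"
  by (simp add: T_def pre_0)

lemma T_cong: "(\<And>y. y \<in> X \<Longrightarrow> g y = h y) \<Longrightarrow> T n g x = T n h x"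
  unfolding T_def by (rule sum.cong) (auto dest: pre_X)

lemma consf_in_iff:
  assumes "z \<in> X"
  shows "consf a z \<in> X \<longleftrightarrow> a < k \<and> (\<forall>w\<in>F. map (consf a z) [0..<length w] \<noteq> w)"
proof
  assume h: "consf a z \<in> X"
  have "consf a z 0 < k" using h by (simp add: sft_def)
  moreover have "map (\<lambda>j. consf a z (0 + j)) [0..<length w] \<noteq> w" if "w \<in> F" for w
    using h that unfolding sft_def mem_Collect_eq by blast
  ultimately show "a < k \<and> (\<forall>w\<in>F. map (consf a z) [0..<length w] \<noteq> w)"
    by (simp add: consf_def)
next
  assume A: "a < k \<and> (\<forall>w\<in>F. map (consf a z) [0..<length w] \<noteq> w)"
  have "map (\<lambda>j. consf a z (i + j)) [0..<length w] \<noteq> w" if "w \<in> F" for i w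
  proof (cases i)
    case 0 then show ?thesis using A that by simp
  next
    case (Suc i')
    have "map (\<lambda>j. consf a z (i + j)) [0..<length w] = map (\<lambda>j. z (i' + j)) [0..<length w]"
      using Suc by (intro map_cong) (auto simp: consf_def)
    then show ?thesis using assms that by (simp add: sft_def del: map_eq_conv)
  qed
  moreover have "\<forall>i. consf a z i < k" using A assms by (auto simp: consf_def sft_def)
  ultimately show "consf a z \<in> X" by (simp add: sft_def)
qed

lemma consf_in_local:
  assumes "x \<in> X" "y \<in> X" "\<forall>i<M. y i = x i"
  shows "consf a y \<in> X \<longleftrightarrow> consf a x \<in> X"
proof -
  have "map (consf a y) [0..<length w] = map (consf a x) [0..<length w]" if "w \<in> F" for w
    using len_le_M[OF that] assms(3) by (intro map_cong) (auto simp: consf_def)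
  then show ?thesis using consf_in_iff assms(1,2) by (auto simp del: map_eq_conv)
qed

lemma transfer_consf:
  "transfer_op X \<psi> g x = (\<Sum>a<k. if consf a x \<in> X then exp (\<psi> (consf a x)) * g (consf a x) else 0)"
proof -
  have "{y \<in> X. shift y = x} = (\<lambda>a. consf a x) ` {a \<in> {..<k}. consf a x \<in> X}"
  proof (rule set_eqI, rule iffI)
    fix y assume y: "y \<in> {y \<in> X. shift y = x}"
    then have "y = consf (y 0) x" using consf_shift by auto
    moreover have "y 0 < k" using y by (auto simp: sft_def)
    ultimately show "y \<in> (\<lambda>a. consf a x) ` {a \<in> {..<k}. consf a x \<in> X}" using y by auto
  qed auto
  moreover have "inj_on (\<lambda>a. consf a x) {a \<in> {..<k}. consf a x \<in> X}"
  proof (rule inj_onI)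
    fix a b assume "consf a x = consf b x"
    then have "consf a x 0 = consf b x 0" by simp
    then show "a = b" by (simp add: consf_def)
  qed
  ultimately have "transfer_op X \<psi> g x = (\<Sum>a\<in>{a \<in> {..<k}. consf a x \<in> X}. exp (\<psi> (consf a x)) * g (consf a x))"
    unfolding transfer_op_def by (simp add: sum.reindex)
  also have "\<dots> = (\<Sum>a<k. if consf a x \<in> X then exp (\<psi> (consf a x)) * g (consf a x) else 0)"
    by (rule sum.inter_filter) simp
  finally show ?thesis .
qed

lemma cont_consf_term:
  fixes h :: "(nat\<Rightarrow>nat) \<Rightarrow> real"
  assumes "continuous_on X h"
  shows "continuous_on X (\<lambda>x. if consf a x \<in> X then h (consf a x) else 0)"
proof (rule cyl_imp_cont)
  fix x and e :: real assume x: "x \<in> X" and e: "e > 0"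
  show "\<exists>r. \<forall>y\<in>X. (\<forall>i<r. y i = x i) \<longrightarrow>
     \<bar>(if consf a y \<in> X then h (consf a y) else 0) - (if consf a x \<in> X then h (consf a x) else 0)\<bar> < e"
  proof (cases "consf a x \<in> X")
    case True
    obtain r where r: "\<forall>y\<in>X. (\<forall>i<r. y i = consf a x i) \<longrightarrow> \<bar>h y - h (consf a x)\<bar> < e"
      using cont_imp_cyl[OF assms True e] by blast
    have "\<forall>y\<in>X. (\<forall>i<max r M. y i = x i) \<longrightarrow>
     \<bar>(if consf a y \<in> X then h (consf a y) else 0) - (if consf a x \<in> X then h (consf a x) else 0)\<bar> < e"
    proof (intro ballI impI)
      fix y assume y: "y \<in> X" "\<forall>i<max r M. y i = x i"
      have yin: "consf a y \<in> X" using consf_in_local[OF x y(1)] y(2) True by auto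
      have "\<forall>i<r. consf a y i = consf a x i" using y(2) by (auto simp: consf_def)
      then show "\<bar>(if consf a y \<in> X then h (consf a y) else 0) - (if consf a x \<in> X then h (consf a x) else 0)\<bar> < e"
        using r yin True by auto
    qed
    then show ?thesis by blast
  next
    case False
    have "\<forall>y\<in>X. (\<forall>i<M. y i = x i) \<longrightarrow>
     \<bar>(if consf a y \<in> X then h (consf a y) else 0) - (if consf a x \<in> X then h (consf a x) else 0)\<bar> < e"
      using consf_in_local[OF x] False e by auto
    then show ?thesis by blast
  qed
qed

lemma cont_transfer:
  assumes "continuous_on X g"
  shows "continuous_on X (transfer_op X \<psi> g)"
proof -
  have h: "continuous_on X (\<lambda>y. exp (\<psi> y) * g y)"
    by (intro continuous_on_mult continuous_on_exp cont\<psi> assms)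
  have "continuous_on X (\<lambda>x. \<Sum>a<k. if consf a x \<in> X then exp (\<psi> (consf a x)) * g (consf a x) else 0)"
    by (rule continuous_on_sum) (rule cont_consf_term[OF h])
  then show ?thesis by (simp add: transfer_consf[abs_def])
qed

lemma cont_T:
  assumes "continuous_on X g"
  shows "continuous_on X (T n g)"
  using assms
proof (induction n arbitrary: g)
  case 0
  have "continuous_on X (T 0 g) = continuous_on X g" by (rule continuous_on_cong) (auto simp: T_0)
  then show ?case using 0 by simp
next
  case (Suc n)
  have "continuous_on X (T n (transfer_op X \<psi> g))" by (rule Suc.IH[OF cont_transfer[OF Suc.prems]])
  moreover have "T (Suc n) g = T n (transfer_op X \<psi> g)" by (rule ext) (rule T_Suc)
  ultimately show ?case by simp
qed

end



locale gset = sfts +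
  fixes \<mu> :: "(nat \<Rightarrow> nat) measure" and \<phi> :: "(nat \<Rightarrow> nat) \<Rightarrow> real"
  assumes L1: "\<forall>x\<in>sft k F. transfer_op (sft k F) \<psi> (\<lambda>_. 1) x = 1"
    and gm: "g_measure (sft k F) \<psi> \<mu>"
    and cont\<phi>: "continuous_on (sft k F) \<phi>"
begin

lemma prob: "prob_space \<mu>" using gm by (simp add: g_measure_def)

lemma sets_mu: "sets \<mu> = sets (restrict_space borel X)" using gm by (simp add: g_measure_def)

lemma space_mu: "space \<mu> = X"
  using sets_eq_imp_space_eq[OF sets_mu] by (simp add: space_restrict_space)

lemma gm_int: "continuous_on X g \<Longrightarrow> (\<integral>x. transfer_op X \<psi> g x \<partial>\<mu>) = (\<integral>x. g x \<partial>\<mu>)"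
  using gm by (simp add: g_measure_def)

lemma meas: "continuous_on X g \<Longrightarrow> g \<in> borel_measurable \<mu>"
  using borel_measurable_continuous_on_restrict measurable_cong_sets[OF sets_mu refl] by blast

lemma integ:
  fixes g :: "(nat\<Rightarrow>nat) \<Rightarrow> real"
  assumes "continuous_on X g" shows "integrable \<mu> g"
proof -
  obtain B where B: "\<forall>x\<in>X. \<bar>g x\<bar> \<le> B" using cont_bounded[OF assms] by blast
  show ?thesis
  proof (rule finite_measure.integrable_const_bound[where B=B])
    show "finite_measure \<mu>" using prob unfolding prob_space_def by blast
    show "AE x in \<mu>. norm (g x) \<le> B" using B by (intro AE_I2) (simp add: space_mu)
  qed (rule meas[OF assms])
qed

lemma int_T:
  assumes "continuous_on X g"
  shows "(\<integral>x. T n g x \<partial>\<mu>) = (\<integral>x. g x \<partial>\<mu>)"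
  using assms
proof (induction n arbitrary: g)
  case 0 then show ?case by (intro Bochner_Integration.integral_cong) (auto simp: space_mu T_0)
next
  case (Suc n)
  have "T (Suc n) g = T n (transfer_op X \<psi> g)" by (rule ext) (rule T_Suc)
  then show ?case using Suc.IH[OF cont_transfer[OF Suc.prems]] gm_int[OF Suc.prems] by simp
qed

lemma T1: "x \<in> X \<Longrightarrow> T n (\<lambda>_. 1) x = 1"
proof (induction n arbitrary: x)
  case 0 then show ?case by (simp add: T_0)
next
  case (Suc n)
  have "T (Suc n) (\<lambda>_. 1) x = T n (transfer_op X \<psi> (\<lambda>_. 1)) x" by (rule T_Suc)
  also have "\<dots> = T n (\<lambda>_. 1) x" by (rule T_cong) (use L1 in auto)
  finally show ?case using Suc by simp
qed

lemma invar:
  fixes g :: "(nat\<Rightarrow>nat) \<Rightarrow> real"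
  assumes "continuous_on X g"
  shows "(\<integral>x. g (shift x) \<partial>\<mu>) = (\<integral>x. g x \<partial>\<mu>)"
proof -
  have c: "continuous_on X (\<lambda>x. g (shift x))" by (rule cont_shift[OF assms])
  have "transfer_op X \<psi> (\<lambda>x. g (shift x)) x = g x" if "x \<in> X" for x
  proof -
    have "transfer_op X \<psi> (\<lambda>x. g (shift x)) x = (\<Sum>y\<in>{y \<in> X. shift y = x}. exp (\<psi> y) * g x)"
      unfolding transfer_op_def by (rule sum.cong) auto
    also have "\<dots> = g x * transfer_op X \<psi> (\<lambda>_. 1) x"
      unfolding transfer_op_def by (simp add: sum_distrib_left mult.commute)
    finally show ?thesis using L1 that by simp
  qed
  then have "(\<integral>x. transfer_op X \<psi> (\<lambda>x. g (shift x)) x \<partial>\<mu>) = (\<integral>x. g x \<partial>\<mu>)"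
    by (intro Bochner_Integration.integral_cong) (auto simp: space_mu)
  then show ?thesis using gm_int[OF c] by simp
qed

lemma cont_iter:
  fixes g :: "(nat\<Rightarrow>nat) \<Rightarrow> real"
  assumes "continuous_on X g"
  shows "continuous_on X (\<lambda>x. g ((shift ^^ i) x))"
proof (induction i)
  case 0 then show ?case using assms by simp
next
  case (Suc i)
  have "continuous_on X (\<lambda>x. (\<lambda>x. g ((shift ^^ i) x)) (shift x))" by (rule cont_shift[OF Suc])
  then show ?case by (simp add: funpow_swap1)
qed

lemma int_iter:
  fixes g :: "(nat\<Rightarrow>nat) \<Rightarrow> real"
  assumes "continuous_on X g"
  shows "(\<integral>x. g ((shift ^^ i) x) \<partial>\<mu>) = (\<integral>x. g x \<partial>\<mu>)"
proof (induction i)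
  case 0 then show ?case by simp
next
  case (Suc i)
  have "(\<integral>x. g ((shift ^^ Suc i) x) \<partial>\<mu>) = (\<integral>x. (\<lambda>x. g ((shift ^^ i) x)) (shift x) \<partial>\<mu>)"
    by (simp add: funpow_swap1)
  also have "\<dots> = (\<integral>x. g ((shift ^^ i) x) \<partial>\<mu>)" by (rule invar[OF cont_iter[OF assms]])
  finally show ?case using Suc by simp
qed

lemma int_birk: "(\<integral>x. birkhoff_sum n \<phi> x \<partial>\<mu>) = real n * (\<integral>x. \<phi> x \<partial>\<mu>)"
proof -
  have "(\<integral>x. birkhoff_sum n \<phi> x \<partial>\<mu>) = (\<Sum>i<n. \<integral>x. \<phi> ((shift ^^ i) x) \<partial>\<mu>)"
    unfolding birkhoff_sum_def by (rule Bochner_Integration.integral_sum) (rule integ[OF cont_iter[OF cont\<phi>]])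
  also have "\<dots> = (\<Sum>i<n. \<integral>x. \<phi> x \<partial>\<mu>)" by (rule sum.cong) (auto simp: int_iter[OF cont\<phi>])
  finally show ?thesis by simp
qed

end



context sfts
begin

definition W :: "nat \<Rightarrow> nat list set" where "W n = word n ` X"
definition cylw :: "nat \<Rightarrow> nat list \<Rightarrow> (nat \<Rightarrow> nat) set" where "cylw n w = {y \<in> X. word n y = w}"
definition sw :: "nat \<Rightarrow> ((nat \<Rightarrow> nat) \<Rightarrow> real) \<Rightarrow> nat list \<Rightarrow> real" where
  "sw n f w = (SUP y\<in>cylw n w. birkhoff_sum n f y)"
definition Z :: "nat \<Rightarrow> ((nat \<Rightarrow> nat) \<Rightarrow> real) \<Rightarrow> real" where
  "Z n f = (\<Sum>C\<in>cylinders X n. exp (SUP x\<in>C. birkhoff_sum n f x))"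

lemma finite_W: "finite (W n)"
  unfolding W_def by (rule finite_subset[OF _ words_finite[of n]]) (auto dest: word_in)

lemma Z_words: "Z n f = (\<Sum>w\<in>W n. exp (sw n f w))"
proof -
  have cyl: "cylinders X n = cylw n ` W n"
  proof (rule set_eqI, rule iffI)
    fix C assume "C \<in> cylinders X n"
    then obtain x where x: "x \<in> X" "C = {y\<in>X. \<forall>i<n. y i = x i}" by (auto simp: cylinders_def)
    then have "C = cylw n (word n x)" by (auto simp: cylw_def word_eq_iff)
    then show "C \<in> cylw n ` W n" using x by (auto simp: W_def)
  next
    fix C assume "C \<in> cylw n ` W n"
    then obtain x where x: "x \<in> X" "C = cylw n (word n x)" by (auto simp: W_def)
    then have "C = {y\<in>X. \<forall>i<n. y i = x i}" by (auto simp: cylw_def word_eq_iff)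
    then show "C \<in> cylinders X n" using x by (auto simp: cylinders_def)
  qed
  have inj: "inj_on (cylw n) (W n)"
  proof (rule inj_onI)
    fix w w' assume "w \<in> W n" "w' \<in> W n" "cylw n w = cylw n w'"
    then obtain x where "x \<in> X" "w = word n x" "x \<in> cylw n w'" by (auto simp: W_def cylw_def)
    then show "w = w'" by (simp add: cylw_def)
  qed
  show ?thesis unfolding Z_def cyl sum.reindex[OF inj] by (simp add: sw_def)
qed

lemma birk_bound:
  fixes f :: "(nat\<Rightarrow>nat) \<Rightarrow> real"
  assumes "continuous_on X f"
  shows "\<exists>B. \<forall>y\<in>X. \<bar>birkhoff_sum n f y\<bar> \<le> B"
proof -
  obtain B where B: "\<forall>x\<in>X. \<bar>f x\<bar> \<le> B" using cont_bounded[OF assms] by blast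
  have "\<bar>birkhoff_sum n f y\<bar> \<le> real n * B" if "y \<in> X" for y
  proof -
    have "\<bar>birkhoff_sum n f y\<bar> \<le> (\<Sum>i<n. \<bar>f ((shift ^^ i) y)\<bar>)"
      unfolding birkhoff_sum_def by (rule sum_abs)
    also have "\<dots> \<le> (\<Sum>i<n. B)" by (rule sum_mono) (use B sft_funpow that in auto)
    finally show ?thesis by simp
  qed
  then show ?thesis by blast
qed

lemma sw_upper:
  fixes f :: "(nat\<Rightarrow>nat) \<Rightarrow> real"
  assumes "continuous_on X f" "y \<in> X"
  shows "birkhoff_sum n f y \<le> sw n f (word n y)"
proof -
  obtain B where B: "\<forall>y\<in>X. \<bar>birkhoff_sum n f y\<bar> \<le> B" using birk_bound[OF assms(1)] by blast
  have "bdd_above ((birkhoff_sum n f) ` cylw n (word n y))"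
    by (rule bdd_aboveI2[of _ _ B]) (use B in \<open>auto simp: cylw_def\<close>)
  moreover have "y \<in> cylw n (word n y)" using assms by (simp add: cylw_def)
  ultimately show ?thesis unfolding sw_def by (rule cSUP_upper2) simp
qed

lemma sw_le:
  assumes "w \<in> W n" "\<And>y. y \<in> cylw n w \<Longrightarrow> birkhoff_sum n f y \<le> c"
  shows "sw n f w \<le> c"
  unfolding sw_def
proof (rule cSUP_least)
  show "cylw n w \<noteq> {}" using assms(1) by (auto simp: W_def cylw_def)
qed (rule assms(2))

lemma Z_pos: "X \<noteq> {} \<Longrightarrow> Z n f > 0"
  unfolding Z_words using finite_W by (intro sum_pos) (auto simp: W_def)

lemma pre_le_Z:
  fixes f :: "(nat\<Rightarrow>nat) \<Rightarrow> real"
  assumes "continuous_on X f"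
  shows "(\<Sum>y\<in>pre n x. exp (birkhoff_sum n f y)) \<le> Z n f"
proof -
  have "(\<Sum>y\<in>pre n x. exp (birkhoff_sum n f y)) \<le> (\<Sum>y\<in>pre n x. exp (sw n f (word n y)))"
    by (rule sum_mono) (use sw_upper[OF assms] pre_X in auto)
  also have "\<dots> = (\<Sum>w\<in>word n ` pre n x. exp (sw n f w))"
    by (rule sum.reindex[OF inj_word_pre, symmetric, unfolded comp_def])
  also have "\<dots> \<le> (\<Sum>w\<in>W n. exp (sw n f w))"
    by (rule sum_mono2[OF finite_W]) (auto simp: W_def pre_def)
  finally show ?thesis by (simp add: Z_words)
qed

lemma word_add: "word (n + m) y = word n y @ word m ((shift ^^ n) y)"
proof -
  have "[0..<n+m] = [0..<n] @ [n..<n+m]" by (rule upt_add_eq_append) simp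
  moreover have "map y [n..<n+m] = map (\<lambda>i. y (i + n)) [0..<m]"
    by (rule nth_equalityI) (auto simp: add.commute)
  ultimately show ?thesis by (simp add: word_def funpow_shift)
qed

lemma Z_subadd:
  fixes f :: "(nat\<Rightarrow>nat) \<Rightarrow> real"
  assumes "continuous_on X f"
  shows "Z (n + m) f \<le> Z n f * Z m f"
proof -
  have "(\<Sum>w\<in>W (n+m). exp (sw (n+m) f w)) \<le> (\<Sum>w\<in>W (n+m). exp (sw n f (take n w)) * exp (sw m f (drop n w)))"
  proof (rule sum_mono)
    fix w assume w: "w \<in> W (n+m)"
    have "sw (n+m) f w \<le> sw n f (take n w) + sw m f (drop n w)"
    proof (rule sw_le[OF w])
      fix y assume y: "y \<in> cylw (n+m) w"
      then have yX: "y \<in> X" and wy: "w = word n y @ word m ((shift ^^ n) y)"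
        by (auto simp: cylw_def word_add)
      have "length (word n y) = n" by (simp add: word_def)
      then have tw: "take n w = word n y" "drop n w = word m ((shift ^^ n) y)" using wy by auto
      show "birkhoff_sum (n + m) f y \<le> sw n f (take n w) + sw m f (drop n w)"
        unfolding birkhoff_add tw using sw_upper[OF assms yX] sw_upper[OF assms sft_funpow[OF yX]]
        by (intro add_mono) auto
    qed
    then show "exp (sw (n+m) f w) \<le> exp (sw n f (take n w)) * exp (sw m f (drop n w))"
      by (simp add: exp_add[symmetric])
  qed
  also have "\<dots> = (\<Sum>p\<in>(\<lambda>w. (take n w, drop n w)) ` W (n+m). exp (sw n f (fst p)) * exp (sw m f (snd p)))"
  proof -
    have "inj_on (\<lambda>w. (take n w, drop n w)) (W (n + m))"
      by (rule inj_onI) (metis append_take_drop_id prod.inject)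
    then show ?thesis by (simp add: sum.reindex)
  qed
  also have "\<dots> \<le> (\<Sum>p\<in>W n \<times> W m. exp (sw n f (fst p)) * exp (sw m f (snd p)))"
  proof (rule sum_mono2)
    show "finite (W n \<times> W m)" using finite_W by simp
    show "(\<lambda>w. (take n w, drop n w)) ` W (n + m) \<subseteq> W n \<times> W m"
    proof
      fix p assume "p \<in> (\<lambda>w. (take n w, drop n w)) ` W (n + m)"
      then obtain y where y: "y \<in> X" "p = (take n (word (n+m) y), drop n (word (n+m) y))"
        by (auto simp: W_def)
      have "length (word n y) = n" by (simp add: word_def)
      then show "p \<in> W n \<times> W m"
        unfolding y(2) word_add using y(1) sft_funpow[OF y(1)] by (auto simp: W_def)
    qed
  qed auto
  also have "\<dots> = Z n f * Z m f"
    unfolding Z_words sum_product sum.cartesian_product by (simp add: case_prod_beta)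
  finally show ?thesis by (simp add: Z_words)
qed

end



context gset
begin

lemma variation:
  assumes R: "\<forall>y\<in>X. \<forall>y'\<in>X. (\<forall>i<R. y i = y' i) \<longrightarrow> \<bar>\<psi> y - \<psi> y'\<bar> < \<eta>"
    and B: "\<forall>x\<in>X. \<bar>\<psi> x\<bar> \<le> B" and B0: "0 \<le> B" and eta: "0 \<le> \<eta>"
    and y: "y \<in> X" "y' \<in> X" "\<forall>i<n. y i = y' i"
  shows "birkhoff_sum n \<psi> y \<le> birkhoff_sum n \<psi> y' + real n * \<eta> + 2 * B * real R"
proof -
  have "birkhoff_sum n \<psi> y - birkhoff_sum n \<psi> y' = (\<Sum>i<n. \<psi> ((shift ^^ i) y) - \<psi> ((shift ^^ i) y'))"
    by (simp add: birkhoff_sum_def sum_subtractf)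
  also have "\<dots> \<le> (\<Sum>i<n. \<eta> + (if n < i + R then 2 * B else 0))"
  proof (rule sum_mono)
    fix i assume i: "i \<in> {..<n}"
    have yi: "(shift ^^ i) y \<in> X" "(shift ^^ i) y' \<in> X" using y sft_funpow by auto
    show "\<psi> ((shift ^^ i) y) - \<psi> ((shift ^^ i) y') \<le> \<eta> + (if n < i + R then 2 * B else 0)"
    proof (cases "n < i + R")
      case True
      have "\<psi> ((shift ^^ i) y) \<le> B" "- \<psi> ((shift ^^ i) y') \<le> B" using B yi by (auto simp: abs_le_iff)
      then show ?thesis using True eta by simp
    next
      case False
      then have "\<forall>j<R. (shift ^^ i) y j = (shift ^^ i) y' j" using y(3) by (auto simp: funpow_shift)
      then show ?thesis using R yi False by fastforce
    qed
  qed
  also have "\<dots> = real n * \<eta> + (\<Sum>i<n. if n < i + R then 2 * B else 0)"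
    by (simp add: sum.distrib)
  also have "(\<Sum>i<n. if n < i + R then 2 * B else 0) = (\<Sum>i\<in>{i\<in>{..<n}. n < i + R}. 2 * B)"
    by (rule sum.inter_filter[symmetric]) simp
  also have "\<dots> = real (card {i\<in>{..<n}. n < i + R}) * (2 * B)" by simp
  also have "\<dots> \<le> real R * (2 * B)"
  proof (rule mult_right_mono)
    have "{i\<in>{..<n}. n < i + R} \<subseteq> {n - R..<n}" by auto
    then have "card {i\<in>{..<n}. n < i + R} \<le> card {n - R..<n}" by (rule card_mono[rotated]) simp
    then show "real (card {i\<in>{..<n}. n < i + R}) \<le> real R" by simp
  qed (use B0 in simp)
  finally show ?thesis by (simp add: algebra_simps)
qed

lemma glue_in:
  assumes y: "y \<in> X" "y' \<in> X" and n: "M \<le> n" and agree: "\<forall>i. n - M \<le> i \<and> i < n \<longrightarrow> y i = y' i"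
  shows "(\<lambda>i. if i < n then y i else y' i) \<in> X"
proof -
  let ?g = "\<lambda>i. if i < n then y i else y' i"
  have "map (\<lambda>j. ?g (i + j)) [0..<length w] \<noteq> w" if w: "w \<in> F" for i w
  proof (cases "i + length w \<le> n")
    case True
    then have "map (\<lambda>j. ?g (i + j)) [0..<length w] = map (\<lambda>j. y (i + j)) [0..<length w]"
      by (intro map_cong) auto
    then show ?thesis using y(1) w by (simp add: sft_def del: map_eq_conv)
  next
    case False
    have "length w \<le> M" by (rule len_le_M[OF w])
    then have "map (\<lambda>j. ?g (i + j)) [0..<length w] = map (\<lambda>j. y' (i + j)) [0..<length w]"
      using False n agree by (intro map_cong) auto
    then show ?thesis using y(2) w by (simp add: sft_def del: map_eq_conv)
  qed
  moreover have "\<forall>i. ?g i < k" using y by (auto simp: sft_def)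
  ultimately show ?thesis by (simp add: sft_def)
qed

lemma fiber_bound:
  assumes R: "\<forall>y\<in>X. \<forall>y'\<in>X. (\<forall>i<R. y i = y' i) \<longrightarrow> \<bar>\<psi> y - \<psi> y'\<bar> < \<eta>"
    and B: "\<forall>x\<in>X. \<bar>\<psi> x\<bar> \<le> B" and B0: "0 \<le> B" and eta: "0 \<le> \<eta>" and n: "M \<le> n"
  shows "(\<Sum>w\<in>{w\<in>W n. drop (n - M) w = u}. exp (sw n \<psi> w)) \<le> exp (real n * \<eta> + 2 * B * real R)"
proof (cases "{w\<in>W n. drop (n - M) w = u} = {}")
  case True then show ?thesis by (simp only: True sum.empty) simp
next
  case False
  let ?D = "real n * \<eta> + 2 * B * real R"
  let ?fib = "{w\<in>W n. drop (n - M) w = u}"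
  obtain y0 where y0: "y0 \<in> X" "drop (n - M) (word n y0) = u" using False by (auto simp: W_def)
  define rep where "rep w = (SOME y. y \<in> X \<and> word n y = w)" for w
  have rep: "rep w \<in> X \<and> word n (rep w) = w" if wW: "w \<in> W n" for w
  proof -
    obtain x where "x \<in> X" "word n x = w" using wW unfolding W_def by blast
    then show ?thesis unfolding rep_def by (rule someI[where P="\<lambda>y. y \<in> X \<and> word n y = w", OF conjI])
  qed
  define gl where "gl w = (\<lambda>i. if i < n then rep w i else y0 i)" for w
  have word_nth: "word n z ! i = z i" if "i < n" for z i using that by (simp add: word_def)
  have glX: "gl w \<in> X" if w: "w \<in> ?fib" for w
    unfolding gl_def
  proof (rule glue_in[OF _ y0(1) n])
    show "rep w \<in> X" using rep w by auto
    show "\<forall>i. n - M \<le> i \<and> i < n \<longrightarrow> rep w i = y0 i"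
    proof (intro allI impI)
      fix i assume i: "n - M \<le> i \<and> i < n"
      have "drop (n - M) (word n (rep w)) = drop (n - M) (word n y0)" using rep w y0 by auto
      then have "drop (n - M) (word n (rep w)) ! (i - (n - M)) = drop (n - M) (word n y0) ! (i - (n - M))"
        by simp
      then show "rep w i = y0 i" using i word_nth by (simp add: word_def)
    qed
  qed
  have glword: "word n (gl w) = w" if w: "w \<in> ?fib" for w
  proof -
    have "word n (gl w) = word n (rep w)" by (simp add: word_eq_iff gl_def)
    then show ?thesis using rep w by auto
  qed
  have glpre: "gl w \<in> pre n ((shift ^^ n) y0)" if w: "w \<in> ?fib" for w
    using glX[OF w] by (auto simp: pre_def funpow_shift gl_def)
  have "(\<Sum>w\<in>?fib. exp (sw n \<psi> w)) \<le> (\<Sum>w\<in>?fib. exp ?D * exp (birkhoff_sum n \<psi> (gl w)))"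
  proof (rule sum_mono)
    fix w assume w: "w \<in> ?fib"
    have "sw n \<psi> w \<le> birkhoff_sum n \<psi> (gl w) + ?D"
    proof (rule sw_le)
      show "w \<in> W n" using w by auto
      fix y assume y: "y \<in> cylw n w"
      have "\<forall>i<n. y i = gl w i" using y glword[OF w] by (auto simp: cylw_def word_eq_iff[symmetric])
      then show "birkhoff_sum n \<psi> y \<le> birkhoff_sum n \<psi> (gl w) + ?D"
        using variation[OF R B B0 eta _ glX[OF w], of y n] y by (auto simp: cylw_def algebra_simps)
    qed
    then show "exp (sw n \<psi> w) \<le> exp ?D * exp (birkhoff_sum n \<psi> (gl w))"
      by (simp add: exp_add[symmetric] add.commute)
  qed
  also have "\<dots> = exp ?D * (\<Sum>z\<in>gl ` ?fib. exp (birkhoff_sum n \<psi> z))"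
  proof -
    have "inj_on gl ?fib" by (rule inj_onI) (metis glword)
    then show ?thesis by (simp add: sum.reindex sum_distrib_left)
  qed
  also have "\<dots> \<le> exp ?D * (\<Sum>z\<in>pre n ((shift ^^ n) y0). exp (birkhoff_sum n \<psi> z))"
    by (intro mult_left_mono sum_mono2 finite_pre) (use glpre in auto)
  also have "(\<Sum>z\<in>pre n ((shift ^^ n) y0). exp (birkhoff_sum n \<psi> z)) = 1"
    using T1[OF sft_funpow[OF y0(1)], of n n] by (simp add: T_def)
  finally show ?thesis by simp
qed

lemma Zpsi_bound:
  assumes R: "\<forall>y\<in>X. \<forall>y'\<in>X. (\<forall>i<R. y i = y' i) \<longrightarrow> \<bar>\<psi> y - \<psi> y'\<bar> < \<eta>"
    and B: "\<forall>x\<in>X. \<bar>\<psi> x\<bar> \<le> B" and B0: "0 \<le> B" and eta: "0 \<le> \<eta>" and n: "M \<le> n"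
  shows "Z n \<psi> \<le> real k ^ M * exp (real n * \<eta> + 2 * B * real R)"
proof -
  let ?KW = "{u. set u \<subseteq> {..<k} \<and> length u = M}"
  have sub: "(\<lambda>w. drop (n - M) w) ` W n \<subseteq> ?KW"
  proof
    fix u assume "u \<in> (\<lambda>w. drop (n - M) w) ` W n"
    then obtain y where y: "y \<in> X" "u = drop (n - M) (word n y)" by (auto simp: W_def)
    then show "u \<in> ?KW" using word_in[OF y(1), of n] n by (auto dest: in_set_dropD)
  qed
  have "Z n \<psi> = (\<Sum>u\<in>?KW. \<Sum>w\<in>{w\<in>W n. drop (n - M) w = u}. exp (sw n \<psi> w))"
    unfolding Z_words by (rule sum.group[OF finite_W words_finite sub, symmetric])
  also have "\<dots> \<le> (\<Sum>u\<in>?KW. exp (real n * \<eta> + 2 * B * real R))"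
    by (rule sum_mono) (rule fiber_bound[OF R B B0 eta n])
  also have "\<dots> = real k ^ M * exp (real n * \<eta> + 2 * B * real R)"
    by (simp add: card_lists_length_eq)
  finally show ?thesis .
qed

end



lemma sub_mult:
  fixes b :: "nat \<Rightarrow> real"
  assumes sub: "\<And>n m. b (n + m) \<le> b n + b m"
  shows "b (q * m + r) \<le> real q * b m + b r"
proof (induction q)
  case 0 then show ?case by simp
next
  case (Suc q)
  have "b (Suc q * m + r) = b (m + (q * m + r))" by (simp add: add.assoc)
  also have "\<dots> \<le> b m + b (q * m + r)" by (rule sub)
  finally show ?case using Suc by (simp add: algebra_simps)
qed

lemma fekete:
  fixes b :: "nat \<Rightarrow> real"
  assumes sub: "\<And>n m. b (n + m) \<le> b n + b m" and nn: "\<And>n. b n \<ge> 0"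
  shows "\<exists>L. (\<lambda>n. b n / real n) \<longlonglongrightarrow> L"
proof -
  define S where "S = (\<lambda>n. b n / real n) ` {1..}"
  define L where "L = Inf S"
  have Sne: "S \<noteq> {}" by (auto simp: S_def)
  have bdd: "bdd_below S" unfolding S_def by (rule bdd_belowI[of _ 0]) (auto intro: nn divide_nonneg_nonneg)
  have low: "L \<le> b n / real n" if "n \<ge> 1" for n
    unfolding L_def using that by (intro cInf_lower bdd) (auto simp: S_def)
  have "(\<lambda>n. b n / real n) \<longlonglongrightarrow> L"
  proof (rule LIMSEQ_I)
    fix r :: real assume r: "r > 0"
    have "Inf S < L + r/2" using r by (simp add: L_def)
    then obtain s where s: "s \<in> S" "s < L + r/2" using cInf_lessD[OF Sne] by blast
    then obtain m where m: "m \<ge> 1" "b m / real m < L + r/2" by (auto simp: S_def)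
    define K where "K = Max (b ` {..<m})"
    have K: "b j \<le> K" if "j < m" for j unfolding K_def using that by (intro Max_ge) auto
    have K0: "K \<ge> 0" using K[of 0] m nn[of 0] by auto
    obtain N where N: "real N > 2 * K / r" using reals_Archimedean2 by blast
    have "\<forall>n\<ge>max N 1. norm (b n / real n - L) < r"
    proof (intro allI impI)
      fix n assume n: "n \<ge> max N 1"
      define q where "q = n div m"
      define j where "j = n mod m"
      have nq: "n = q * m + j" by (simp add: q_def j_def)
      have jm: "j < m" using m by (simp add: j_def)
      have "b n \<le> real q * b m + K" using sub_mult[of b q m j, OF sub] K[OF jm] nq by simp
      moreover have "real q * b m \<le> real n * (b m / real m)"
      proof -
        have "real q * real m \<le> real n" using nq by (metis le_add1 of_nat_le_iff of_nat_mult)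
        then have "real q * real m * (b m / real m) \<le> real n * (b m / real m)"
          by (rule mult_right_mono) (use nn[of m] in simp)
        then show ?thesis using m by simp
      qed
      ultimately have "b n \<le> real n * (b m / real m) + K" by linarith
      then have "b n / real n \<le> b m / real m + K / real n"
        using n by (simp add: field_simps)
      moreover have "K / real n < r / 2"
      proof -
        have "real n \<ge> real N" using n by simp
        then have "real n > 2 * K / r" using N by linarith
        then show ?thesis using r n by (simp add: field_simps)
      qed
      ultimately have "b n / real n < L + r" using m by linarith
      moreover have "L \<le> b n / real n" using low n by simp
      ultimately show "norm (b n / real n - L) < r" by simp
    qed
    then show "\<exists>no. \<forall>n\<ge>no. norm (b n / real n - L) < r" by blast
  qed
  then show ?thesis by blast
qed

lemma fekete2:
  fixes a :: "nat \<Rightarrow> real"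
  assumes sub: "\<And>n m. a (n + m) \<le> a n + a m" and lb: "\<And>n. a n \<ge> real n * c"
  shows "\<exists>L. (\<lambda>n. a n / real n) \<longlonglongrightarrow> L"
proof -
  define b where "b n = a n - real n * c" for n
  have "\<exists>L. (\<lambda>n. b n / real n) \<longlonglongrightarrow> L"
  proof (rule fekete)
    fix n m
    have "a (n + m) \<le> a n + a m" by (rule sub)
    then show "b (n + m) \<le> b n + b m" by (simp add: b_def algebra_simps)
  next
    fix n
    have "a n \<ge> real n * c" by (rule lb)
    then show "b n \<ge> 0" by (simp add: b_def)
  qed
  then obtain L where L: "(\<lambda>n. b n / real n) \<longlonglongrightarrow> L" by blast
  then have "(\<lambda>n. b n / real n + c) \<longlonglongrightarrow> L + c" by (intro tendsto_intros)
  moreover have "eventually (\<lambda>n. b n / real n + c = a n / real n) sequentially"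
    using eventually_ge_at_top[of 1] by eventually_elim (auto simp: b_def field_simps)
  ultimately have "(\<lambda>n. a n / real n) \<longlonglongrightarrow> L + c" by (rule Lim_transform_eventually)
  then show ?thesis by blast
qed

context gset
begin

lemma Xne: "X \<noteq> {}"
  using prob_space.prob_space[OF prob] by (auto simp: space_mu[symmetric])

lemma int_const: "(\<integral>x. (c::real) \<partial>\<mu>) = c"
proof -
  have "measure \<mu> (space \<mu>) = 1" by (rule prob_space.prob_space[OF prob])
  then show ?thesis by simp
qed

lemma cont_ft: "continuous_on X (\<lambda>x. s * \<phi> x + \<psi> x)"
  by (intro continuous_on_add continuous_on_mult continuous_on_const cont\<phi> cont\<psi>)

lemma int_exp_le: "(\<integral>x. exp (s * birkhoff_sum n \<phi> x) \<partial>\<mu>) \<le> Z n (\<lambda>x. s * \<phi> x + \<psi> x)"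
proof -
  have c: "continuous_on X (\<lambda>x. exp (s * birkhoff_sum n \<phi> x))"
    by (intro continuous_on_exp continuous_on_mult continuous_on_const cont_birkhoff cont\<phi>)
  have e1: "(\<integral>x. exp (s * birkhoff_sum n \<phi> x) \<partial>\<mu>) = (\<integral>x. T n (\<lambda>x. exp (s * birkhoff_sum n \<phi> x)) x \<partial>\<mu>)"
    by (rule int_T[OF c, symmetric])
  have e2: "(\<integral>x. T n (\<lambda>x. exp (s * birkhoff_sum n \<phi> x)) x \<partial>\<mu>) \<le> (\<integral>x. Z n (\<lambda>x. s * \<phi> x + \<psi> x) \<partial>\<mu>)"
  proof (rule integral_mono)
    show "integrable \<mu> (T n (\<lambda>x. exp (s * birkhoff_sum n \<phi> x)))" by (rule integ[OF cont_T[OF c]])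
    show "integrable \<mu> (\<lambda>x. Z n (\<lambda>x. s * \<phi> x + \<psi> x))" by (rule integ) (rule continuous_on_const)
    fix x
    have "T n (\<lambda>x. exp (s * birkhoff_sum n \<phi> x)) x = (\<Sum>y\<in>pre n x. exp (birkhoff_sum n (\<lambda>x. s * \<phi> x + \<psi> x) y))"
      unfolding T_def
    proof (rule sum.cong[OF refl])
      fix y
      have "birkhoff_sum n (\<lambda>x. s * \<phi> x + \<psi> x) y = s * birkhoff_sum n \<phi> y + birkhoff_sum n \<psi> y"
        by (rule birkhoff_lin)
      then show "exp (birkhoff_sum n \<psi> y) * exp (s * birkhoff_sum n \<phi> y) = exp (birkhoff_sum n (\<lambda>x. s * \<phi> x + \<psi> x) y)"
        by (simp only: exp_add mult.commute)
    qed
    also have "\<dots> \<le> Z n (\<lambda>x. s * \<phi> x + \<psi> x)" by (rule pre_le_Z[OF cont_ft])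
    finally show "T n (\<lambda>x. exp (s * birkhoff_sum n \<phi> x)) x \<le> Z n (\<lambda>x. s * \<phi> x + \<psi> x)" .
  qed
  have e3: "(\<integral>x. Z n (\<lambda>x. s * \<phi> x + \<psi> x) \<partial>\<mu>) = Z n (\<lambda>x. s * \<phi> x + \<psi> x)" by (rule int_const)
  show ?thesis unfolding e1 using e2 unfolding e3 .
qed

lemma Z_lower: "exp (s * real n * (\<integral>x. \<phi> x \<partial>\<mu>)) \<le> Z n (\<lambda>x. s * \<phi> x + \<psi> x)"
proof -
  define c where "c = s * real n * (\<integral>x. \<phi> x \<partial>\<mu>)"
  define h where "h x = s * birkhoff_sum n \<phi> x" for x
  have ch: "continuous_on X h" unfolding h_def
    by (intro continuous_on_mult continuous_on_const cont_birkhoff cont\<phi>)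
  have ih: "integrable \<mu> h" by (rule integ[OF ch])
  have inth: "(\<integral>x. h x \<partial>\<mu>) = c" unfolding h_def c_def by (simp add: int_birk)
  have pt: "exp c + exp c * (h x - c) \<le> exp (h x)" for x
  proof -
    have "exp c * (1 + (h x - c)) \<le> exp c * exp (h x - c)"
      by (intro mult_left_mono exp_ge_add_one_self) simp
    then show ?thesis by (simp add: exp_diff algebra_simps)
  qed
  have "(\<integral>x. exp c + exp c * (h x - c) \<partial>\<mu>) \<le> (\<integral>x. exp (h x) \<partial>\<mu>)"
  proof (rule integral_mono[OF _ _ pt])
    show "integrable \<mu> (\<lambda>x. exp c + exp c * (h x - c))"
      by (intro integ continuous_on_add continuous_on_mult continuous_on_diff continuous_on_const ch)
    show "integrable \<mu> (\<lambda>x. exp (h x))" by (intro integ continuous_on_exp ch)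
  qed
  moreover have "(\<integral>x. exp c + exp c * (h x - c) \<partial>\<mu>) = exp c"
  proof -
    have "(\<integral>x. exp c + exp c * (h x - c) \<partial>\<mu>) = (\<integral>x. exp c \<partial>\<mu>) + (\<integral>x. exp c * (h x - c) \<partial>\<mu>)"
      by (rule Bochner_Integration.integral_add) (auto intro!: integ continuous_on_mult continuous_on_diff continuous_on_const ch)
    also have "(\<integral>x. exp c * (h x - c) \<partial>\<mu>) = exp c * ((\<integral>x. h x \<partial>\<mu>) - (\<integral>x. c \<partial>\<mu>))"
    proof -
      have "(\<integral>x. exp c * (h x - c) \<partial>\<mu>) = exp c * (\<integral>x. h x - c \<partial>\<mu>)" by (rule integral_mult_right_zero)
      also have "(\<integral>x. h x - c \<partial>\<mu>) = (\<integral>x. h x \<partial>\<mu>) - (\<integral>x. c \<partial>\<mu>)"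
        by (rule Bochner_Integration.integral_diff[OF ih integ[OF continuous_on_const]])
      finally show ?thesis .
    qed
    finally show ?thesis using inth prob_space.prob_space[OF prob] by (simp add: int_const)
  qed
  ultimately have "exp c \<le> (\<integral>x. exp (h x) \<partial>\<mu>)" by simp
  also have "\<dots> \<le> Z n (\<lambda>x. s * \<phi> x + \<psi> x)" unfolding h_def by (rule int_exp_le)
  finally show ?thesis by (simp add: c_def)
qed

lemma pressure_lim:
  "(\<lambda>n. (1 / real n) * ln (Z n (\<lambda>x. s * \<phi> x + \<psi> x))) \<longlonglongrightarrow> pressure X (\<lambda>x. s * \<phi> x + \<psi> x)"
proof -
  let ?f = "\<lambda>x. s * \<phi> x + \<psi> x"
  define a where "a n = ln (Z n ?f)" for n
  have pos: "Z n ?f > 0" for n by (rule Z_pos[OF Xne])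
  have "\<exists>L. (\<lambda>n. a n / real n) \<longlonglongrightarrow> L"
  proof (rule fekete2)
    show "a (n + m) \<le> a n + a m" for n m
    proof -
      have "ln (Z (n + m) ?f) \<le> ln (Z n ?f * Z m ?f)"
        using Z_subadd[OF cont_ft, of n m s] pos[of n] pos[of m] pos[of "n+m"] by simp
      also have "\<dots> = ln (Z n ?f) + ln (Z m ?f)" using pos[of n] pos[of m] by (simp add: ln_mult)
      finally show ?thesis unfolding a_def .
    qed
    show "a n \<ge> real n * (s * (\<integral>x. \<phi> x \<partial>\<mu>))" for n
      unfolding a_def using Z_lower[of s n] pos[of n] by (subst ln_ge_iff) (auto simp: algebra_simps)
  qed
  then obtain L where L: "(\<lambda>n. a n / real n) \<longlonglongrightarrow> L" by blast
  have eq: "(\<lambda>n. (1 / real n) * ln (Z n ?f)) = (\<lambda>n. a n / real n)" by (simp add: a_def)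
  have "pressure X ?f = L" unfolding pressure_def Z_def[symmetric] eq by (rule limI[OF L])
  then show ?thesis using L eq by simp
qed

lemma pressure_ge: "pressure X (\<lambda>x. s * \<phi> x + \<psi> x) \<ge> s * (\<integral>x. \<phi> x \<partial>\<mu>)"
proof (rule LIMSEQ_le_const[OF pressure_lim])
  show "\<exists>N. \<forall>n\<ge>N. s * (\<integral>x. \<phi> x \<partial>\<mu>) \<le> 1 / real n * ln (Z n (\<lambda>x. s * \<phi> x + \<psi> x))"
  proof (intro exI[of _ 1] allI impI)
    fix n :: nat assume n: "n \<ge> 1"
    have "s * real n * (\<integral>x. \<phi> x \<partial>\<mu>) \<le> ln (Z n (\<lambda>x. s * \<phi> x + \<psi> x))"
      using Z_lower[of s n] Z_pos[OF Xne] by (subst ln_ge_iff) auto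
    then show "s * (\<integral>x. \<phi> x \<partial>\<mu>) \<le> 1 / real n * ln (Z n (\<lambda>x. s * \<phi> x + \<psi> x))"
      using n by (simp add: field_simps)
  qed
qed

end



context gset
begin

lemma k_pos: "k \<ge> 1"
proof -
  obtain x where "x \<in> X" using Xne by blast
  then have "x 0 < k" by (simp add: sft_def)
  then show ?thesis by simp
qed

lemma P0_le: "pressure X (\<lambda>x. 0 * \<phi> x + \<psi> x) \<le> 0"
proof -
  have Zeq: "Z n (\<lambda>x. 0 * \<phi> x + \<psi> x) = Z n \<psi>" for n by simp
  have le_eta: "pressure X (\<lambda>x. 0 * \<phi> x + \<psi> x) \<le> \<eta>" if eta: "\<eta> > 0" for \<eta>
  proof -
    obtain R where R: "\<forall>y\<in>X. \<forall>y'\<in>X. (\<forall>i<R. y i = y' i) \<longrightarrow> \<bar>\<psi> y - \<psi> y'\<bar> < \<eta>"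
      using unif_cont[OF cont\<psi> eta] by blast
    obtain B0 where B0: "\<forall>x\<in>X. \<bar>\<psi> x\<bar> \<le> B0" using cont_bounded[OF cont\<psi>] by blast
    define B where "B = max B0 0"
    have B: "\<forall>x\<in>X. \<bar>\<psi> x\<bar> \<le> B" using B0 by (auto simp: B_def)
    have Bn: "0 \<le> B" by (simp add: B_def)
    define C where "C = real M * ln (real k) + 2 * B * real R"
    have lim2: "(\<lambda>n. \<eta> + C / real n) \<longlonglongrightarrow> \<eta> + 0"
      by (intro tendsto_intros lim_const_over_n)
    show ?thesis
    proof (rule LIMSEQ_le[OF pressure_lim[of 0] lim2[simplified]])
      show "\<exists>N. \<forall>n\<ge>N. 1 / real n * ln (Z n (\<lambda>x. 0 * \<phi> x + \<psi> x)) \<le> \<eta> + C / real n"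
      proof (intro exI[of _ "max M 1"] allI impI)
        fix n assume n: "max M 1 \<le> n"
        have "Z n \<psi> \<le> real k ^ M * exp (real n * \<eta> + 2 * B * real R)"
          by (rule Zpsi_bound[OF R B Bn]) (use eta n in auto)
        then have "ln (Z n \<psi>) \<le> ln (real k ^ M * exp (real n * \<eta> + 2 * B * real R))"
          using Z_pos[OF Xne, of n \<psi>] by simp
        also have "\<dots> = real n * \<eta> + C"
          using k_pos by (simp add: C_def ln_mult ln_realpow)
        finally have "ln (Z n \<psi>) \<le> real n * \<eta> + C" .
        then show "1 / real n * ln (Z n (\<lambda>x. 0 * \<phi> x + \<psi> x)) \<le> \<eta> + C / real n"
          using n by (simp add: field_simps)
      qed
    qed
  qed
  show ?thesis
  proof (rule ccontr)
    assume "\<not> ?thesis"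
    then have "pressure X (\<lambda>x. 0 * \<phi> x + \<psi> x) > 0" by simp
    then show False using le_eta[of "pressure X (\<lambda>x. 0 * \<phi> x + \<psi> x) / 2"] by simp
  qed
qed

end



context gset
begin

abbreviation "P s \<equiv> pressure X (\<lambda>x. s * \<phi> x + \<psi> x)"

lemma markov_step:
  assumes t: "t > 0" and n: "n \<ge> 1" and e: "\<epsilon> > 0"
    and Zt: "Z n (\<lambda>x. t * \<phi> x + \<psi> x) \<le> exp (real n * (t * (\<integral>x. \<phi> x \<partial>\<mu>) + t * \<epsilon> / 2))"
    and Zmt: "Z n (\<lambda>x. (- t) * \<phi> x + \<psi> x) \<le> exp (real n * (- t * (\<integral>x. \<phi> x \<partial>\<mu>) + t * \<epsilon> / 2))"
  shows "measure \<mu> {x\<in>X. \<bar>birkhoff_sum n \<phi> x / real n - (\<integral>y. \<phi> y \<partial>\<mu>)\<bar> \<ge> \<epsilon>}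
           \<le> 2 * exp (- (real n * t * \<epsilon> / 2))"
proof -
  define m where "m = (\<integral>x. \<phi> x \<partial>\<mu>)"
  define S where "S = birkhoff_sum n \<phi>"
  define u where "u x = exp (- (t * real n * m)) * exp (t * S x) + exp (t * real n * m) * exp ((- t) * S x)" for x
  define c where "c = exp (real n * t * \<epsilon>)"
  have cS: "continuous_on X S" unfolding S_def by (rule cont_birkhoff[OF cont\<phi>])
  have c1: "continuous_on X (\<lambda>x. exp (t * S x))" by (intro continuous_on_exp continuous_on_mult continuous_on_const cS)
  have c2: "continuous_on X (\<lambda>x. exp ((- t) * S x))" by (intro continuous_on_exp continuous_on_mult continuous_on_const cS)
  have cu: "continuous_on X u" unfolding u_def
    by (intro continuous_on_add continuous_on_mult continuous_on_const c1 c2)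
  have sub: "{x\<in>X. \<bar>S x / real n - m\<bar> \<ge> \<epsilon>} \<subseteq> {x\<in>space \<mu>. c \<le> u x}"
  proof
    fix x assume x: "x \<in> {x\<in>X. \<bar>S x / real n - m\<bar> \<ge> \<epsilon>}"
    then have "\<bar>S x - real n * m\<bar> \<ge> real n * \<epsilon>"
    proof -
      have "\<bar>S x - real n * m\<bar> = real n * \<bar>S x / real n - m\<bar>"
        using n by (simp add: field_simps abs_mult[symmetric])
      then show ?thesis using x n by (simp add: mult_left_mono)
    qed
    then have "S x - real n * m \<ge> real n * \<epsilon> \<or> - (S x - real n * m) \<ge> real n * \<epsilon>" by linarith
    then have "c \<le> u x"
    proof
      assume a: "S x - real n * m \<ge> real n * \<epsilon>"
      have "t * (real n * \<epsilon>) \<le> t * (S x - real n * m)" using a t by (intro mult_left_mono) auto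
      then have "c \<le> exp (- (t * real n * m)) * exp (t * S x)"
        by (simp add: c_def exp_add[symmetric] algebra_simps)
      moreover have "0 \<le> exp (t * real n * m) * exp ((- t) * S x)" by simp
      ultimately show ?thesis unfolding u_def by linarith
    next
      assume a: "- (S x - real n * m) \<ge> real n * \<epsilon>"
      have "t * (real n * \<epsilon>) \<le> t * (- (S x - real n * m))" using a t by (intro mult_left_mono) auto
      then have "c \<le> exp (t * real n * m) * exp ((- t) * S x)"
        by (simp add: c_def exp_add[symmetric] algebra_simps)
      moreover have "0 \<le> exp (- (t * real n * m)) * exp (t * S x)" by simp
      ultimately show ?thesis unfolding u_def by linarith
    qed
    then show "x \<in> {x\<in>space \<mu>. c \<le> u x}" using x by (simp add: space_mu)
  qed
  have meas_set: "{x\<in>space \<mu>. c \<le> u x} \<in> sets \<mu>"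
  proof -
    have "u -` {c..} \<inter> space \<mu> \<in> sets \<mu>" by (rule measurable_sets[OF meas[OF cu]]) simp
    moreover have "u -` {c..} \<inter> space \<mu> = {x\<in>space \<mu>. c \<le> u x}" by auto
    ultimately show ?thesis by simp
  qed
  have "measure \<mu> {x\<in>X. \<bar>S x / real n - m\<bar> \<ge> \<epsilon>} \<le> measure \<mu> {x\<in>space \<mu>. c \<le> u x}"
    by (rule finite_measure.finite_measure_mono[OF _ sub meas_set]) (use prob in \<open>simp add: prob_space_def\<close>)
  also have "\<dots> \<le> (\<integral>x. u x \<partial>\<mu>) / c"
    by (rule integral_Markov_inequality_measure[OF integ[OF cu], of "space \<mu>"]) (auto simp: u_def c_def)
  also have "(\<integral>x. u x \<partial>\<mu>) = exp (- (t * real n * m)) * (\<integral>x. exp (t * S x) \<partial>\<mu>) + exp (t * real n * m) * (\<integral>x. exp ((- t) * S x) \<partial>\<mu>)"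
  proof -
    have "(\<integral>x. u x \<partial>\<mu>) = (\<integral>x. exp (- (t * real n * m)) * exp (t * S x) \<partial>\<mu>) + (\<integral>x. exp (t * real n * m) * exp ((- t) * S x) \<partial>\<mu>)"
      unfolding u_def by (rule Bochner_Integration.integral_add) (intro integ continuous_on_mult continuous_on_const c1 c2)+
    then show ?thesis by (simp only: integral_mult_right_zero)
  qed
  also have "\<dots> \<le> exp (- (t * real n * m)) * exp (real n * (t * m + t * \<epsilon> / 2)) + exp (t * real n * m) * exp (real n * (- t * m + t * \<epsilon> / 2))"
  proof (intro add_mono mult_left_mono)
    show "(\<integral>x. exp (t * S x) \<partial>\<mu>) \<le> exp (real n * (t * m + t * \<epsilon> / 2))"
      using int_exp_le[of t n] Zt unfolding S_def m_def by linarith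
    show "(\<integral>x. exp ((- t) * S x) \<partial>\<mu>) \<le> exp (real n * (- t * m + t * \<epsilon> / 2))"
      using int_exp_le[of "-t" n] Zmt unfolding S_def m_def by linarith
  qed auto
  also have "\<dots> = 2 * exp (real n * t * \<epsilon> / 2)"
    by (simp add: exp_add[symmetric] algebra_simps)
  finally have "measure \<mu> {x\<in>X. \<bar>S x / real n - m\<bar> \<ge> \<epsilon>} \<le> 2 * exp (real n * t * \<epsilon> / 2) / c"
    using c_def by (simp add: divide_right_mono)
  also have "\<dots> = 2 * exp (- (real n * t * \<epsilon> / 2))"
    by (simp add: c_def exp_minus field_simps exp_add[symmetric])
  finally show ?thesis by (simp add: S_def m_def)
qed

end



context gset
begin

lemma main:
  assumes diff: "(\<lambda>t. pressure X (\<lambda>x. t * \<phi> x + \<psi> x)) differentiable (at (0::real))"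
  shows "\<forall>\<epsilon>>0. \<exists>\<delta>>0. eventually (\<lambda>n. measure \<mu>
           {x\<in>X. \<bar>birkhoff_sum n \<phi> x / real n - (\<integral>y. \<phi> y \<partial>\<mu>)\<bar> \<ge> \<epsilon>}
           \<le> exp (- real n * \<delta>)) sequentially"
proof (intro allI impI)
  fix \<epsilon> :: real assume e: "\<epsilon> > 0"
  define m where "m = (\<integral>x. \<phi> x \<partial>\<mu>)"
  obtain D where D: "((\<lambda>t. P t) has_real_derivative D) (at 0)"
    using diff by (auto simp: real_differentiable_def)
  have P00: "P 0 = 0" using P0_le pressure_ge[of 0] by simp
  have Dm: "D - m = 0"
  proof (rule DERIV_local_min[where d=1])
    show "((\<lambda>t. P t - t * m) has_real_derivative D - m) (at 0)"
    proof (rule DERIV_diff[OF D])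
      show "((\<lambda>t. t * m) has_real_derivative m) (at 0)" by (auto intro!: derivative_eq_intros)
    qed
    show "\<forall>y. \<bar>0 - y\<bar> < 1 \<longrightarrow> P 0 - 0 * m \<le> P y - y * m"
      using P00 pressure_ge unfolding m_def by (auto simp: mult.commute)
  qed simp
  have "(\<lambda>h. (P (0 + h) - P 0) / h) \<midarrow>0\<rightarrow> D" using D by (simp add: DERIV_def)
  then have lim: "(\<lambda>h. P h / h) \<midarrow>0\<rightarrow> m" using Dm P00 by simp
  obtain d where d: "d > 0" "\<forall>h. h \<noteq> 0 \<and> norm (h - 0) < d \<longrightarrow> norm (P h / h - m) < \<epsilon> / 4"
    using LIM_D[OF lim, of "\<epsilon>/4"] e by auto
  define t where "t = d / 2"
  have t: "t > 0" "t < d" using d by (auto simp: t_def)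
  have Pt: "P t < t * m + t * \<epsilon> / 2"
  proof -
    have "\<bar>P t / t - m\<bar> < \<epsilon> / 4" using d(2)[rule_format, of t] t by auto
    then have "P t / t < m + \<epsilon> / 2" using e by linarith
    then show ?thesis using t by (simp add: field_simps)
  qed
  have Pmt: "P (- t) < - t * m + t * \<epsilon> / 2"
  proof -
    have "\<bar>P (- t) / (- t) - m\<bar> < \<epsilon> / 4" using d(2)[rule_format, of "-t"] t by auto
    then have "P (- t) / (- t) > m - \<epsilon> / 2" using e by linarith
    then show ?thesis using t by (simp add: field_simps)
  qed
  have ev1: "eventually (\<lambda>n. 1 / real n * ln (Z n (\<lambda>x. t * \<phi> x + \<psi> x)) < t * m + t * \<epsilon> / 2) sequentially"
    by (rule order_tendstoD(2)[OF pressure_lim Pt])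
  have ev2: "eventually (\<lambda>n. 1 / real n * ln (Z n (\<lambda>x. (- t) * \<phi> x + \<psi> x)) < - t * m + t * \<epsilon> / 2) sequentially"
    by (rule order_tendstoD(2)[OF pressure_lim Pmt])
  obtain N :: nat where N: "real N > ln 2 / (t * \<epsilon> / 4)" using reals_Archimedean2 by blast
  have ev3: "eventually (\<lambda>n. n \<ge> max N 1) sequentially" by (rule eventually_ge_at_top)
  show "\<exists>\<delta>>0. eventually (\<lambda>n. measure \<mu>
           {x\<in>X. \<bar>birkhoff_sum n \<phi> x / real n - (\<integral>y. \<phi> y \<partial>\<mu>)\<bar> \<ge> \<epsilon>}
           \<le> exp (- real n * \<delta>)) sequentially"
  proof (intro exI[of _ "t * \<epsilon> / 4"] conjI)
    show "t * \<epsilon> / 4 > 0" using t e by simp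
    show "eventually (\<lambda>n. measure \<mu>
           {x\<in>X. \<bar>birkhoff_sum n \<phi> x / real n - (\<integral>y. \<phi> y \<partial>\<mu>)\<bar> \<ge> \<epsilon>}
           \<le> exp (- real n * (t * \<epsilon> / 4))) sequentially"
      using ev1 ev2 ev3
    proof eventually_elim
      case (elim n)
      have n1: "n \<ge> 1" using elim(3) by simp
      have Zp: "Z n (\<lambda>x. s * \<phi> x + \<psi> x) > 0" for s by (rule Z_pos[OF Xne])
      have Zt: "Z n (\<lambda>x. t * \<phi> x + \<psi> x) \<le> exp (real n * (t * m + t * \<epsilon> / 2))"
      proof -
        have "ln (Z n (\<lambda>x. t * \<phi> x + \<psi> x)) < real n * (t * m + t * \<epsilon> / 2)"
          using elim(1) n1 by (simp add: field_simps)
        then show ?thesis using Zp[of t] by (metis exp_less_mono exp_ln less_imp_le)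
      qed
      have Zmt: "Z n (\<lambda>x. (- t) * \<phi> x + \<psi> x) \<le> exp (real n * (- t * m + t * \<epsilon> / 2))"
      proof -
        have "ln (Z n (\<lambda>x. (- t) * \<phi> x + \<psi> x)) < real n * (- t * m + t * \<epsilon> / 2)"
          using elim(2) n1 by (simp add: field_simps)
        then show ?thesis using Zp[of "-t"] by (metis exp_less_mono exp_ln less_imp_le)
      qed
      have "measure \<mu> {x\<in>X. \<bar>birkhoff_sum n \<phi> x / real n - (\<integral>y. \<phi> y \<partial>\<mu>)\<bar> \<ge> \<epsilon>}
           \<le> 2 * exp (- (real n * t * \<epsilon> / 2))"
        by (rule markov_step[OF t(1) n1 e]) (use Zt Zmt in \<open>simp_all add: m_def\<close>)
      also have "\<dots> \<le> exp (- real n * (t * \<epsilon> / 4))"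
      proof -
        have "real n \<ge> real N" using elim(3) by simp
        then have "real n > ln 2 / (t * \<epsilon> / 4)" using N by linarith
        then have "real n * (t * \<epsilon> / 4) > ln 2" using t e by (simp add: field_simps)
        then have "exp (real n * (t * \<epsilon> / 4)) > 2"
          by (metis exp_ln exp_less_mono zero_less_numeral)
        then have "2 * exp (- (real n * t * \<epsilon> / 2)) < exp (real n * (t * \<epsilon> / 4)) * exp (- (real n * t * \<epsilon> / 2))"
          by simp
        also have "\<dots> = exp (- real n * (t * \<epsilon> / 4))" by (simp add: exp_add[symmetric] algebra_simps)
        finally show ?thesis by simp
      qed
      finally show ?case .
    qed
  qed
qed

end


theorem proposition5p6:
  fixes k :: nat and F :: "nat list set" and \<phi> \<psi> :: "(nat \<Rightarrow> nat) \<Rightarrow> real"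
    and \<mu> :: "(nat \<Rightarrow> nat) measure"
  assumes "finite F"
    and "continuous_on (sft k F) \<phi>" and "continuous_on (sft k F) \<psi>"
    and "\<forall>x\<in>sft k F. transfer_op (sft k F) \<psi> (\<lambda>_. 1) x = 1"
    and "g_measure (sft k F) \<psi> \<mu>"
    and "(\<lambda>t. pressure (sft k F) (\<lambda>x. t * \<phi> x + \<psi> x)) differentiable (at (0::real))"
  shows "\<forall>\<epsilon>>0. \<exists>\<delta>>0. eventually (\<lambda>n. measure \<mu>
           {x\<in>sft k F. \<bar>birkhoff_sum n \<phi> x / real n - (\<integral>y. \<phi> y \<partial>\<mu>)\<bar> \<ge> \<epsilon>}
           \<le> exp (- real n * \<delta>)) sequentially"
proof -
  interpret gset k F \<psi> \<mu> \<phi>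
    by unfold_locales (use assms in auto)
  show ?thesis by (rule main[OF assms(6)])
qed

end
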